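(* Let $\mu>0$ and let $\gamma$ be a curve in $\mathbb M^2(\rho)$ with constant curvature $\kappa$ satisfying $\frac{d^2}{ds^2}(e^{\mu\kappa})+(\kappa^2-\kappa/\mu+\rho)e^{\mu\kappa}=0$. Then: (1) if $\rho=0$ (Euclidean plane $\mathbb R^2$), $\gamma$ is either a geodesic (straight line) or a circle of radius $\mu$; (2) if $\rho>0$ (sphere $\mathbb S^2(\rho)$), then $0<2\sqrt\rho\,\mu\le 1$; if $2\sqrt\rho\,\mu<1$ there are two solutions, corresponding to two parallels (circles), and if $2\sqrt\rho\,\mu=1$ the solution is a circle of curvature $\sqrt\rho$; (3) if $\rho<0$ (hyperbolic plane $\mathbb H^2(\rho)$), $\gamma$ is either a circle or a hypercycle.
   Context: $\mathbb M^2(\rho)$ is the simply connected complete surface of constant curvature $\rho$; $\kappa$ denotes signed geodesic curvature and $s$ arc-length. Standing assumption in the paper: the energy index $\mu$ is positive. *)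

theory Defs
  imports "HOL-Analysis.Analysis"
begin

text \<open>Curves of constant signed geodesic curvature \<kappa> in the space form M^2(\<rho>)
  are classified by \<kappa>.  A geodesic circle of radius r in M^2(\<rho>) has geodesic
  curvature (up to the sign given by orientation) equal to ct \<rho> r below; a hypercycle
  at distance d > 0 from a geodesic in H^2(\<rho>) has curvature sqrt(-\<rho>) tanh(sqrt(-\<rho>) d).\<close>

definition ct :: "real \<Rightarrow> real \<Rightarrow> real" where
  "ct \<rho> r = (if \<rho> = 0 then 1 / r
              else if \<rho> > 0 then sqrt \<rho> * cos (sqrt \<rho> * r) / sin (sqrt \<rho> * r)
              else sqrt (- \<rho>) * cosh (sqrt (- \<rho>) * r) / sinh (sqrt (- \<rho>) * r))"

definition is_geodesic :: "real \<Rightarrow> bool" where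
  "is_geodesic \<kappa> \<longleftrightarrow> \<kappa> = 0"

definition is_circle_radius :: "real \<Rightarrow> real \<Rightarrow> real \<Rightarrow> bool" where
  "is_circle_radius \<rho> \<kappa> r \<longleftrightarrow>
     0 < r \<and> (\<rho> > 0 \<longrightarrow> r < pi / sqrt \<rho>) \<and> \<bar>\<kappa>\<bar> = \<bar>ct \<rho> r\<bar>"

definition is_circle :: "real \<Rightarrow> real \<Rightarrow> bool" where
  "is_circle \<rho> \<kappa> \<longleftrightarrow> (\<exists>r. is_circle_radius \<rho> \<kappa> r)"

definition is_hypercycle :: "real \<Rightarrow> real \<Rightarrow> bool" where
  "is_hypercycle \<rho> \<kappa> \<longleftrightarrow>
     \<rho> < 0 \<and> (\<exists>d>0. \<bar>\<kappa>\<bar> = sqrt (- \<rho>) * tanh (sqrt (- \<rho>) * d))"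

definition EL_const :: "real \<Rightarrow> real \<Rightarrow> real \<Rightarrow> bool" where
  "EL_const \<mu> \<rho> \<kappa> \<longleftrightarrow>
     (\<forall>s. deriv (deriv (\<lambda>t. exp (\<mu> * \<kappa>))) s
            + (\<kappa>\<^sup>2 - \<kappa> / \<mu> + \<rho>) * exp (\<mu> * \<kappa>) = 0)"

end

theory Submission
  imports Defs
begin

lemma EL_iff: "EL_const \<mu> \<rho> k \<longleftrightarrow> k\<^sup>2 - k / \<mu> + \<rho> = 0"
  unfolding EL_const_def by simp

lemma tanh_artanh_real:
  fixes y :: real assumes "-1 < y" "y < 1"
  shows "tanh (artanh y) = y"
proof -
  have m: "- 2 * artanh y = - ln ((1 + y) / (1 - y))" by (simp add: artanh_def)
  have e: "exp (- 2 * artanh y) = (1 - y) / (1 + y)"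
    unfolding m exp_minus using assms by simp
  show ?thesis unfolding tanh_real_altdef e using assms by (simp add: field_simps)
qed

lemma circle_pos:
  fixes \<rho> k :: real assumes "\<rho> > 0" shows "is_circle \<rho> k"
proof -
  define a where "a = arctan (\<bar>k\<bar> / sqrt \<rho>)"
  have a: "-(pi/2) < a" "a < pi/2" using arctan_bounded a_def by auto
  define r where "r = (pi/2 - a) / sqrt \<rho>"
  have sp: "sqrt \<rho> > 0" using assms by simp
  have r0: "0 < r" using a sp by (simp add: r_def)
  have r1: "r < pi / sqrt \<rho>" using a sp by (simp add: r_def divide_strict_right_mono)
  have sr: "sqrt \<rho> * r = pi/2 - a" using sp by (simp add: r_def)
  have ca: "cos a > 0" using a cos_gt_zero_pi by auto
  have "ct \<rho> r = sqrt \<rho> * (sin a / cos a)"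
    using assms by (simp add: ct_def sr cos_diff sin_diff)
  also have "\<dots> = sqrt \<rho> * tan a" by (simp add: tan_def)
  also have "\<dots> = \<bar>k\<bar>" using sp by (simp add: a_def tan_arctan)
  finally have "\<bar>k\<bar> = \<bar>ct \<rho> r\<bar>" by simp
  then show ?thesis unfolding is_circle_def is_circle_radius_def using r0 r1 by blast
qed

lemma quad_expand: "((k::real) - A) * (k - B) = k\<^sup>2 - k * (A + B) + A * B"
  by (simp add: power2_eq_square algebra_simps)

lemma ring_sq: "(1 + (d::real)) * (1 - d) = 1 - d * d"
  by (simp add: algebra_simps)

lemma S_lemma: fixes \<mu> \<rho> d :: real assumes "\<mu> > 0" and d2: "d\<^sup>2 = 1 - 4 * \<rho> * \<mu>\<^sup>2"
  shows "{k. EL_const \<mu> \<rho> k} = {(1 + d) / (2 * \<mu>), (1 - d) / (2 * \<mu>)}"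
      proof -
        have "EL_const \<mu> \<rho> k \<longleftrightarrow> (k - (1 + d) / (2 * \<mu>)) * (k - (1 - d) / (2 * \<mu>)) = 0" for k
        proof -
          have "(k - (1 + d) / (2 * \<mu>)) * (k - (1 - d) / (2 * \<mu>)) = (k\<^sup>2 - k / \<mu> + \<rho>)"
          proof -
            have "(k - (1 + d) / (2 * \<mu>)) * (k - (1 - d) / (2 * \<mu>)) = k\<^sup>2 - k / \<mu> + (1 - d\<^sup>2) / (4 * \<mu>\<^sup>2)"
            proof -
              have "(k - (1 + d) / (2 * \<mu>)) * (k - (1 - d) / (2 * \<mu>)) = k\<^sup>2 - k * ((1 + d) / (2 * \<mu>) + (1 - d) / (2 * \<mu>)) + ((1 + d) / (2 * \<mu>)) * ((1 - d) / (2 * \<mu>))"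
                by (rule quad_expand)
              moreover have "(1 + d) / (2 * \<mu>) + (1 - d) / (2 * \<mu>) = 1 / \<mu>"
                using assms(1) by (simp add: add_divide_distrib[symmetric])
              moreover have "((1 + d) / (2 * \<mu>)) * ((1 - d) / (2 * \<mu>)) = (1 - d\<^sup>2) / (4 * \<mu>\<^sup>2)"
              proof -
                have "((1 + d) / (2 * \<mu>)) * ((1 - d) / (2 * \<mu>)) = ((1 + d) * (1 - d)) / ((2 * \<mu>) * (2 * \<mu>))"
                  by (rule times_divide_times_eq)
                also have "(1 + d) * (1 - d) = 1 - d\<^sup>2" using ring_sq[of d] by (simp only: power2_eq_square)
                also have "(2 * \<mu>) * (2 * \<mu>) = 4 * \<mu>\<^sup>2" by (simp add: power2_eq_square)
                finally show ?thesis .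
              qed
              ultimately show ?thesis by (simp only:) simp
            qed
            also have "(1 - d\<^sup>2) / (4 * \<mu>\<^sup>2) = \<rho>"
            proof -
              have "1 - d\<^sup>2 = \<rho> * (4 * \<mu>\<^sup>2)" using d2 by simp
              then show ?thesis using assms(1) by simp
            qed
            finally show ?thesis .
          qed
          then show ?thesis by (simp add: EL_iff)
        qed
        then show ?thesis by auto
      qed

theorem proposition2p4:
  fixes \<mu> \<rho> \<kappa> :: real
  assumes "\<mu> > 0"
    and "EL_const \<mu> \<rho> \<kappa>"
  shows "(\<rho> = 0 \<longrightarrow> is_geodesic \<kappa> \<or> is_circle_radius 0 \<kappa> \<mu>)
       \<and> (\<rho> > 0 \<longrightarrow>
            0 < 2 * sqrt \<rho> * \<mu> \<and> 2 * sqrt \<rho> * \<mu> \<le> 1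
          \<and> (2 * sqrt \<rho> * \<mu> < 1 \<longrightarrow>
               card {k. EL_const \<mu> \<rho> k} = 2 \<and> (\<forall>k. EL_const \<mu> \<rho> k \<longrightarrow> is_circle \<rho> k))
          \<and> (2 * sqrt \<rho> * \<mu> = 1 \<longrightarrow> is_circle \<rho> \<kappa> \<and> \<kappa> = sqrt \<rho>))
       \<and> (\<rho> < 0 \<longrightarrow> is_circle \<rho> \<kappa> \<or> is_hypercycle \<rho> \<kappa>)"
proof -
  have eq: "\<mu> * \<kappa>\<^sup>2 - \<kappa> + \<rho> * \<mu> = 0"
    using assms EL_iff[of \<mu> \<rho> \<kappa>] by (simp add: field_simps)
  have P1: "\<rho> = 0 \<longrightarrow> is_geodesic \<kappa> \<or> is_circle_radius 0 \<kappa> \<mu>"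
  proof
    assume r: "\<rho> = 0"
    then have "\<kappa> * (\<mu> * \<kappa> - 1) = 0" using eq by (simp add: algebra_simps power2_eq_square)
    then have "\<kappa> = 0 \<or> \<kappa> = 1 / \<mu>" using assms(1) by (auto simp: field_simps)
    then show "is_geodesic \<kappa> \<or> is_circle_radius 0 \<kappa> \<mu>"
      using assms(1) by (auto simp: is_geodesic_def is_circle_radius_def ct_def)
  qed
  have P2: "\<rho> > 0 \<longrightarrow>
            0 < 2 * sqrt \<rho> * \<mu> \<and> 2 * sqrt \<rho> * \<mu> \<le> 1
          \<and> (2 * sqrt \<rho> * \<mu> < 1 \<longrightarrow>
               card {k. EL_const \<mu> \<rho> k} = 2 \<and> (\<forall>k. EL_const \<mu> \<rho> k \<longrightarrow> is_circle \<rho> k))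
          \<and> (2 * sqrt \<rho> * \<mu> = 1 \<longrightarrow> is_circle \<rho> \<kappa> \<and> \<kappa> = sqrt \<rho>)"
  proof
    assume rp: "\<rho> > 0"
    have sp: "sqrt \<rho> > 0" using rp by simp
    have sq: "sqrt \<rho> ^ 2 = \<rho>" using rp by simp
    have "(2 * \<mu> * \<kappa> - 1)\<^sup>2 = 1 - 4 * \<rho> * \<mu>\<^sup>2"
    proof -
      have "(2 * \<mu> * \<kappa> - 1)\<^sup>2 = 1 - 4 * \<rho> * \<mu>\<^sup>2 + 4 * \<mu> * (\<mu> * \<kappa>\<^sup>2 - \<kappa> + \<rho> * \<mu>)"
        by algebra
      then show ?thesis using eq by simp
    qed
    then have D: "(2 * sqrt \<rho> * \<mu>)\<^sup>2 \<le> 1"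
      using sq by (simp add: power_mult_distrib) (smt (verit) zero_le_power2)
    have A: "2 * sqrt \<rho> * \<mu> \<le> 1"
    proof (rule ccontr)
      assume "\<not> ?thesis"
      then have "1 < 2 * sqrt \<rho> * \<mu>" by simp
      then have "1 * 1 < (2 * sqrt \<rho> * \<mu>) * (2 * sqrt \<rho> * \<mu>)"
        using sp assms(1) by (intro mult_strict_mono) auto
      then show False using D by (simp add: power2_eq_square)
    qed
    have B: "2 * sqrt \<rho> * \<mu> < 1 \<longrightarrow>
               card {k. EL_const \<mu> \<rho> k} = 2 \<and> (\<forall>k. EL_const \<mu> \<rho> k \<longrightarrow> is_circle \<rho> k)"
    proof
      assume lt: "2 * sqrt \<rho> * \<mu> < 1"
      define d where "d = sqrt (1 - 4 * \<rho> * \<mu>\<^sup>2)"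
      have "(2 * sqrt \<rho> * \<mu>)\<^sup>2 < 1"
      proof -
        have "(2 * sqrt \<rho> * \<mu>) * (2 * sqrt \<rho> * \<mu>) < 1 * 1"
          using lt sp assms(1) by (intro mult_strict_mono) auto
        then show ?thesis by (simp add: power2_eq_square)
      qed
      then have pos: "1 - 4 * \<rho> * \<mu>\<^sup>2 > 0" using sq by (simp add: power_mult_distrib)
      then have d0: "d > 0" and d2: "d\<^sup>2 = 1 - 4 * \<rho> * \<mu>\<^sup>2" by (auto simp: d_def)
      have S: "{k. EL_const \<mu> \<rho> k} = {(1 + d) / (2 * \<mu>), (1 - d) / (2 * \<mu>)}"
        using S_lemma[OF assms(1) d2] .
      have ne: "(1 + d) / (2 * \<mu>) \<noteq> (1 - d) / (2 * \<mu>)" using d0 assms(1) by (simp add: field_simps)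
      show "card {k. EL_const \<mu> \<rho> k} = 2 \<and> (\<forall>k. EL_const \<mu> \<rho> k \<longrightarrow> is_circle \<rho> k)"
        unfolding S using ne circle_pos[OF rp] by simp
    qed
    have C: "2 * sqrt \<rho> * \<mu> = 1 \<longrightarrow> is_circle \<rho> \<kappa> \<and> \<kappa> = sqrt \<rho>"
    proof
      assume e1: "2 * sqrt \<rho> * \<mu> = 1"
      have "\<mu> * (\<kappa> - sqrt \<rho>)\<^sup>2 = \<mu> * \<kappa>\<^sup>2 - \<kappa> + \<rho> * \<mu>"
        using e1 sq by (simp add: power2_eq_square algebra_simps)
      then have "\<kappa> = sqrt \<rho>" using eq assms(1) by simp
      then show "is_circle \<rho> \<kappa> \<and> \<kappa> = sqrt \<rho>" using circle_pos[OF rp] by simp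
    qed
    show "0 < 2 * sqrt \<rho> * \<mu> \<and> 2 * sqrt \<rho> * \<mu> \<le> 1
          \<and> (2 * sqrt \<rho> * \<mu> < 1 \<longrightarrow>
               card {k. EL_const \<mu> \<rho> k} = 2 \<and> (\<forall>k. EL_const \<mu> \<rho> k \<longrightarrow> is_circle \<rho> k))
          \<and> (2 * sqrt \<rho> * \<mu> = 1 \<longrightarrow> is_circle \<rho> \<kappa> \<and> \<kappa> = sqrt \<rho>)"
      using A B C circle_pos[OF rp] mult_pos_pos[OF mult_pos_pos[OF _ sp] assms(1), of 2] by simp
  qed
  have P3: "\<rho> < 0 \<longrightarrow> is_circle \<rho> \<kappa> \<or> is_hypercycle \<rho> \<kappa>"
  proof
    assume rn: "\<rho> < 0"
    define a where "a = sqrt (- \<rho>)"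
    have a0: "a > 0" using rn by (simp add: a_def)
    have a2: "a\<^sup>2 = - \<rho>" using rn by (simp add: a_def)
    have k0: "\<kappa> \<noteq> 0" using eq rn assms(1) by auto
    have kb: "\<bar>\<kappa>\<bar> \<noteq> a"
    proof
      assume "\<bar>\<kappa>\<bar> = a"
      then have "\<kappa>\<^sup>2 = - \<rho>" using a2 by (metis power2_abs)
      then have "\<kappa> = 0" using eq by (simp add: algebra_simps)
      then show False using k0 by simp
    qed
    show "is_circle \<rho> \<kappa> \<or> is_hypercycle \<rho> \<kappa>"
    proof (cases "\<bar>\<kappa>\<bar> < a")
      case True
      define d where "d = artanh (\<bar>\<kappa>\<bar> / a) / a"
      have q: "0 < \<bar>\<kappa>\<bar> / a" "\<bar>\<kappa>\<bar> / a < 1" using True a0 k0 by auto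
      have ad: "a * d = artanh (\<bar>\<kappa>\<bar> / a)" using a0 by (simp add: d_def)
      have t: "tanh (a * d) = \<bar>\<kappa>\<bar> / a" unfolding ad using q by (intro tanh_artanh_real) auto
      have "d > 0"
      proof -
        have "tanh (a * d) > 0" using t q by simp
        then have "a * d > 0" by simp
        then show ?thesis using a0 by (simp add: zero_less_mult_iff)
      qed
      moreover have "\<bar>\<kappa>\<bar> = a * tanh (a * d)" using t a0 by simp
      ultimately have "is_hypercycle \<rho> \<kappa>" unfolding is_hypercycle_def a_def[symmetric] using rn by blast
      then show ?thesis by simp
    next
      case False
      then have gt: "\<bar>\<kappa>\<bar> > a" using kb by simp
      define r where "r = artanh (a / \<bar>\<kappa>\<bar>) / a"
      have q: "0 < a / \<bar>\<kappa>\<bar>" "a / \<bar>\<kappa>\<bar> < 1" using gt a0 by auto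
      have ar: "a * r = artanh (a / \<bar>\<kappa>\<bar>)" using a0 by (simp add: r_def)
      have t: "tanh (a * r) = a / \<bar>\<kappa>\<bar>" unfolding ar using q by (intro tanh_artanh_real) auto
      have ar0: "a * r > 0"
      proof -
        have "tanh (a * r) > 0" using t q by simp
        then show ?thesis by simp
      qed
      then have r0: "r > 0" using a0 by (simp add: zero_less_mult_iff)
      have sh: "sinh (a * r) > 0" using ar0 by simp
      have "ct \<rho> r = a * cosh (a * r) / sinh (a * r)" using rn by (simp add: ct_def a_def)
      also have "\<dots> = a / tanh (a * r)" using sh by (simp add: tanh_def field_simps)
      also have "\<dots> = \<bar>\<kappa>\<bar>" using t a0 gt by simp
      finally have "\<bar>\<kappa>\<bar> = \<bar>ct \<rho> r\<bar>" by simp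
      then have "is_circle \<rho> \<kappa>" unfolding is_circle_def is_circle_radius_def using r0 rn by auto
      then show ?thesis by simp
    qed
  qed
  show ?thesis using P1 P2 P3 by blast
qed

end
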